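(* Let $V\in\mathcal C(S^1)$ be odd and let $f\ge0$ be a ($\mathcal C^1$) solution of (TP) with $D=0$ that is time-periodic, i.e. $f(T,\cdot)=f(0,\cdot)$ for some $T>0$ (and $f(t+T,\cdot)=f(t,\cdot)$). Then $f$ is a stationary solution.
   Context: $S^1=\mathbb R/\mathbb Z$; $(V*f)(\theta)=\int_{S^1}V(\theta-\psi)f(\psi)d\psi$. Equation (TP) with $D=0$: $\partial_tf=\partial_\theta((V*f)f)$. *)

theory Defs
  imports "HOL-Analysis.Analysis"
begin

text \<open>Functions on S^1 = R/Z are represented as 1-periodic functions on R.
  Convolution on S^1: (V * g)(theta) = integral over one period of V(theta - psi) g(psi).\<close>

definition circ_conv :: "(real \<Rightarrow> real) \<Rightarrow> (real \<Rightarrow> real) \<Rightarrow> real \<Rightarrow> real" where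
  "circ_conv V g \<theta> = integral {0..1} (\<lambda>\<psi>. V (\<theta> - \<psi>) * g \<psi>)"

end

theory Submission
  imports Defs
begin

locale tp =
  fixes V :: "real \<Rightarrow> real" and f ft fx :: "real \<Rightarrow> real \<Rightarrow> real" and T :: real
  assumes V_cont: "continuous_on UNIV V"
    and V_per: "\<forall>x. V (x + 1) = V x"
    and V_odd: "\<forall>x. V (- x) = - V x"
    and f_per: "\<forall>t\<ge>0. \<forall>\<theta>. f t (\<theta> + 1) = f t \<theta>"
    and f_nonneg: "\<forall>t\<ge>0. \<forall>\<theta>. f t \<theta> \<ge> 0"
    and cFT: "continuous_on ({0..} \<times> UNIV) (\<lambda>(t, \<theta>). ft t \<theta>)"
    and cFX: "continuous_on ({0..} \<times> UNIV) (\<lambda>(t, \<theta>). fx t \<theta>)"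
    and dT: "\<forall>t\<ge>0. \<forall>\<theta>. ((\<lambda>s. f s \<theta>) has_real_derivative ft t \<theta>) (at t within {0..})"
    and dX: "\<forall>t\<ge>0. \<forall>\<theta>. ((\<lambda>\<phi>. f t \<phi>) has_real_derivative fx t \<theta>) (at \<theta>)"
    and dG: "\<forall>t\<ge>0. \<forall>\<theta>. ((\<lambda>\<phi>. circ_conv V (f t) \<phi> * f t \<phi>) has_real_derivative ft t \<theta>) (at \<theta>)"
    and T_pos: "T > 0"
    and f_tper: "\<forall>t\<ge>0. \<forall>\<theta>. f (t + T) \<theta> = f t \<theta>"
begin

lemma fcont: "continuous_on ({0..} \<times> (UNIV::real set)) (\<lambda>(t,x). f t x)"
  unfolding continuous_on_iff
proof (intro ballI allI impI)
  fix p :: "real\<times>real" and e :: real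
  assume p: "p \<in> {0..}\<times>UNIV" and e: "e>0"
  obtain t0 x0 where p_def: "p = (t0,x0)" by (cases p)
  have t0: "t0 \<ge> 0" using p p_def by auto
  define K where "K = {0..t0+1} \<times> {x0-1..x0+1}"
  have cK: "continuous_on K (\<lambda>(t,x). fx t x)"
    by (rule continuous_on_subset[OF cFX]) (auto simp: K_def)
  have "compact K" unfolding K_def by (intro compact_Times compact_Icc)
  then have "bounded ((\<lambda>(t,x). fx t x) ` K)"
    using cK compact_continuous_image compact_imp_bounded by blast
  then obtain M where M: "M>0" "\<forall>y\<in>(\<lambda>(t,x). fx t x) ` K. norm y \<le> M"
    using bounded_pos by blast
  have Mb: "\<bar>fx t x\<bar> \<le> M" if "t\<in>{0..t0+1}" "x\<in>{x0-1..x0+1}" for t x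
    using M(2) that unfolding K_def by force
  have "continuous (at t0 within {0..}) (\<lambda>s. f s x0)"
    using dT t0 DERIV_continuous by blast
  then obtain d1 where d1: "d1>0" "\<forall>s\<in>{0..}. dist s t0 < d1 \<longrightarrow> dist (f s x0) (f t0 x0) < e/2"
    using e unfolding continuous_within_eps_delta by (meson half_gt_zero)
  define d where "d = min 1 (min d1 (e/(2*M)))"
  show "\<exists>d>0. \<forall>x'\<in>{0..}\<times>UNIV. dist x' p < d \<longrightarrow> dist ((\<lambda>(t,x). f t x) x') ((\<lambda>(t,x). f t x) p) < e"
  proof (intro exI[of _ d] conjI ballI impI)
    show "d>0" using d1 e M by (simp add: d_def)
    fix q assume q: "q \<in> {0..}\<times>UNIV" "dist q p < d"
    obtain t x where q_def: "q = (t,x)" by (cases q)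
    have dt: "dist t t0 < d" using q(2) p_def q_def dist_fst_le[of q p] by simp
    have dx: "dist x x0 < d" using q(2) p_def q_def dist_snd_le[of q p] by simp
    have tnn: "t \<ge> 0" using q q_def by auto
    have ht: "t \<in> {0..t0+1}" using dt tnn by (auto simp: d_def dist_real_def)
    have hx: "x \<in> {x0-1..x0+1}" "x0 \<in> {x0-1..x0+1}" using dx by (auto simp: d_def dist_real_def)
    have "norm (f t x - f t x0) \<le> M * norm (x - x0)"
    proof (rule field_differentiable_bound[of "{x0-1..x0+1}" "\<lambda>\<phi>. f t \<phi>" "\<lambda>\<phi>. fx t \<phi>" M x x0])
      show "convex {x0 - 1..x0 + 1}" by simp
      show "((\<lambda>\<phi>. f t \<phi>) has_field_derivative fx t z) (at z within {x0 - 1..x0 + 1})" for z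
        using dX tnn has_field_derivative_at_within by blast
      show "norm (fx t z) \<le> M" if "z \<in> {x0 - 1..x0 + 1}" for z using Mb[OF ht that] by simp
    qed (use hx in auto)
    also have "M * norm (x - x0) \<le> M * (e/(2*M))"
      using dx M by (intro mult_left_mono) (auto simp: d_def dist_real_def)
    also have "\<dots> = e/2" using M by simp
    finally have A: "\<bar>f t x - f t x0\<bar> \<le> e/2" by simp
    have B: "\<bar>f t x0 - f t0 x0\<bar> < e/2" using d1 tnn dt by (auto simp: d_def dist_real_def)
    show "dist ((\<lambda>(t,x). f t x) q) ((\<lambda>(t,x). f t x) p) < e"
    proof -
      have "\<bar>f t x - f t0 x0\<bar> \<le> \<bar>f t x - f t x0\<bar> + \<bar>f t x0 - f t0 x0\<bar>" by arith
      then show ?thesis using A B q_def p_def by (simp add: dist_real_def)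
    qed
  qed
qed

definition W :: "real \<Rightarrow> real" where "W x = integral {-3..x} V"

lemma Vc: "continuous_on S V" using V_cont continuous_on_subset by blast

lemma W_deriv_within: "z \<in> {-3..3} \<Longrightarrow> (W has_real_derivative V z) (at z within {-3..3})"
  unfolding W_def[abs_def] by (rule integral_has_real_derivative[OF Vc])

lemma W_deriv: "z \<in> {-3<..<3} \<Longrightarrow> (W has_real_derivative V z) (at z)"
proof -
  assume z: "z \<in> {-3<..<3}"
  have "at z within {-3..3} = at z"
    using z by (intro at_within_interior) (simp add: interior_atLeastAtMost_real)
  then show ?thesis using W_deriv_within[of z] z by auto
qed

lemma W_cont: "continuous_on {-3..3} W"
  using W_deriv_within by (rule DERIV_continuous_on)

lemma W_even: "z \<in> {-1..1} \<Longrightarrow> W (-z) = W z"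
proof -
  assume z: "z \<in> {-1..1}"
  have d: "((\<lambda>z. W (-z) - W z) has_real_derivative 0) (at y within {-1..1})" if "y \<in> {-1..1}" for y
  proof -
    have "((\<lambda>z. W (-z) - W z) has_real_derivative (V (-y) * (-1) - V y)) (at y)"
      using that by (intro derivative_intros DERIV_chain2[of W, OF W_deriv] W_deriv) auto
    moreover have "V (-y) * (-1) - V y = 0" using V_odd by simp
    ultimately show ?thesis using has_field_derivative_at_within by fastforce
  qed
  obtain c where hc: "\<forall>x\<in>{-1..1}. W (-x) - W x = c"
    using has_field_derivative_zero_constant[of "{-1..1}" "\<lambda>z. W (-z) - W z", OF _ d] by auto
  have "c = 0" using hc[rule_format, of 0] by simp
  then show ?thesis using hc z by auto
qed

lemma W_shift: "z \<in> {-1..0} \<Longrightarrow> W (z + 1) = W z"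
proof -
  assume z: "z \<in> {-1..0}"
  have d: "((\<lambda>z. W (z + 1) - W z) has_real_derivative 0) (at y within {-1..0})" if "y \<in> {-1..0}" for y
  proof -
    have g: "((\<lambda>x. x + 1) has_real_derivative 1) (at y)" by (auto intro!: derivative_eq_intros)
    have w: "(W has_real_derivative V (y+1)) (at (y+1))" using that by (intro W_deriv) auto
    have "((\<lambda>z. W (z + 1) - W z) has_real_derivative (V (y + 1) * 1 - V y)) (at y)"
      using that by (intro derivative_intros DERIV_chain2[OF w g] W_deriv) auto
    moreover have "V (y + 1) * 1 - V y = 0" using V_per by simp
    ultimately show ?thesis using has_field_derivative_at_within by fastforce
  qed
  obtain c where hc: "\<forall>x\<in>{-1..0}. W (x + 1) - W x = c"
    using has_field_derivative_zero_constant[of "{-1..0}" "\<lambda>z. W (z + 1) - W z", OF _ d] by auto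
  have "W (-1/2 + 1) - W (-1/2) = c" using hc[rule_format, of "-1/2"] by simp
  then have "W (z + 1) - W z = W (-1/2 + 1) - W (-1/2)" using z hc by auto
  also have "\<dots> = 0" using W_even[of "1/2"] by simp
  finally show ?thesis by simp
qed

lemma comp2:
  assumes h: "continuous_on ({0..} \<times> (UNIV::real set)) (\<lambda>(t,x). h t x)"
    and a: "continuous_on S a" and b: "continuous_on S b" and nn: "\<forall>q\<in>S. a q \<ge> (0::real)"
  shows "continuous_on S (\<lambda>q. h (a q) (b q) :: real)"
proof -
  have "continuous_on S (\<lambda>q. (\<lambda>(t,x). h t x) (a q, b q))"
    by (rule continuous_on_compose2[OF h]) (use a b nn in \<open>auto intro!: continuous_intros\<close>)
  then show ?thesis by simp
qed

lemma Wcomp: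
  assumes "continuous_on S u" "\<forall>q\<in>S. u q \<in> {-3..3}"
  shows "continuous_on S (\<lambda>q. W (u q))"
  using continuous_on_compose2[OF W_cont assms(1)] assms(2) by (auto simp: image_subset_iff)

lemma fc: "continuous_on S a \<Longrightarrow> continuous_on S b \<Longrightarrow> \<forall>q\<in>S. a q \<ge> 0 \<Longrightarrow> continuous_on S (\<lambda>q. f (a q) (b q))"
  using comp2[OF fcont] by blast
lemma ftc: "continuous_on S a \<Longrightarrow> continuous_on S b \<Longrightarrow> \<forall>q\<in>S. a q \<ge> 0 \<Longrightarrow> continuous_on S (\<lambda>q. ft (a q) (b q))"
  using comp2[OF cFT] by blast

definition E :: "real \<Rightarrow> real" where
  "E t = integral (cbox (0,0) (1,1)) (\<lambda>(x,y). W (x - y) * (f t x * f t y))"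
definition D :: "real \<Rightarrow> real" where
  "D t = integral (cbox (0,0) (1,1)) (\<lambda>(x,y). W (x - y) * (ft t x * f t y + f t x * ft t y))"

lemma sq_mem: "p \<in> cbox (0::real,0::real) (1,1) \<Longrightarrow> fst p - snd p \<in> {-3..3}"
  by (cases p) (auto simp: cbox_Pair_iff)

lemma E_deriv:
  assumes t: "t \<ge> 0"
  shows "(E has_real_derivative D t) (at t within {0..})"
  unfolding E_def[abs_def] D_def
proof (rule leibniz_rule_field_derivative)
  show "((\<lambda>t. case p of (x, y) \<Rightarrow> W (x - y) * (f t x * f t y)) has_field_derivative
         (case p of (x, y) \<Rightarrow> W (x - y) * (ft s x * f s y + f s x * ft s y))) (at s within {0..})"
    if "s \<in> {0..}" for s p
  proof -
    obtain x y where p: "p = (x,y)" by (cases p)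
    have "((\<lambda>t. W (x - y) * (f t x * f t y)) has_field_derivative
         W (x - y) * (ft s x * f s y + f s x * ft s y)) (at s within {0..})"
      using dT that by (auto intro!: derivative_eq_intros)
    then show ?thesis by (simp add: p)
  qed
  show "(\<lambda>(x, y). W (x - y) * (f s x * f s y)) integrable_on cbox (0, 0) (1, 1)" if "s \<in> {0..}" for s
  proof (rule integrable_continuous)
    have "continuous_on (cbox (0::real, 0::real) (1, 1)) (\<lambda>p. W (fst p - snd p) * (f s (fst p) * f s (snd p)))"
      using that sq_mem by (intro continuous_intros Wcomp fc) auto
    then show "continuous_on (cbox (0, 0) (1, 1)) (\<lambda>(x, y). W (x - y) * (f s x * f s y))"
      by (simp add: case_prod_beta)
  qed
  have "continuous_on ({0..} \<times> cbox (0::real, 0::real) (1, 1))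
     (\<lambda>q. W (fst (snd q) - snd (snd q)) * (ft (fst q) (fst (snd q)) * f (fst q) (snd (snd q))
          + f (fst q) (fst (snd q)) * ft (fst q) (snd (snd q))))"
    using sq_mem by (intro continuous_intros Wcomp fc ftc) auto
  then show "continuous_on ({0..} \<times> cbox (0, 0) (1, 1))
     (\<lambda>(s, p). case p of (x, y) \<Rightarrow> W (x - y) * (ft s x * f s y + f s x * ft s y))"
    by (simp add: case_prod_beta)
qed (use t in auto)

definition H :: "real \<Rightarrow> real \<Rightarrow> real" where
  "H t x = integral {0..1} (\<lambda>y. W (x - y) * f t y)"

lemma sq_cont:
  assumes t: "t \<ge> 0"
  shows "continuous_on (cbox (0::real, 0::real) (1, 1)) (\<lambda>(x, y). W (x - y) * (ft t x * f t y))"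
    and "continuous_on (cbox (0::real, 0::real) (1, 1)) (\<lambda>(x, y). W (x - y) * (f t x * ft t y))"
proof -
  have "continuous_on (cbox (0::real, 0::real) (1, 1)) (\<lambda>p. W (fst p - snd p) * (ft t (fst p) * f t (snd p)))"
    using t sq_mem by (intro continuous_intros Wcomp fc ftc) auto
  then show "continuous_on (cbox (0::real, 0::real) (1, 1)) (\<lambda>(x, y). W (x - y) * (ft t x * f t y))"
    by (simp add: case_prod_beta)
  have "continuous_on (cbox (0::real, 0::real) (1, 1)) (\<lambda>p. W (fst p - snd p) * (f t (fst p) * ft t (snd p)))"
    using t sq_mem by (intro continuous_intros Wcomp fc ftc) auto
  then show "continuous_on (cbox (0::real, 0::real) (1, 1)) (\<lambda>(x, y). W (x - y) * (f t x * ft t y))"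
    by (simp add: case_prod_beta)
qed

lemma D_eq:
  assumes t: "t \<ge> 0"
  shows "D t = 2 * integral {0..1} (\<lambda>x. ft t x * H t x)"
proof -
  let ?S = "cbox (0::real, 0::real) (1, 1)"
  let ?k1 = "\<lambda>(x, y). W (x - y) * (ft t x * f t y)"
  let ?k2 = "\<lambda>(x, y). W (x - y) * (f t x * ft t y)"
  have "D t = integral ?S (\<lambda>p. ?k1 p + ?k2 p)"
    unfolding D_def by (rule arg_cong[where f="integral ?S"]) (auto simp: algebra_simps)
  also have "\<dots> = integral ?S ?k1 + integral ?S ?k2"
    using sq_cont[OF t] by (intro integral_add integrable_continuous)
  also have "integral ?S ?k2 = integral ?S (\<lambda>(x, y). W (y - x) * (f t y * ft t x))"
    using integral_swap_2dim[of 0 0 1 1 "\<lambda>x y. W (x - y) * (f t x * ft t y)"] sq_cont(2)[OF t] by simp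
  also have "\<dots> = integral ?S ?k1"
  proof (rule integral_cong)
    fix p assume p: "p \<in> ?S"
    obtain x y where pxy: "p = (x,y)" by (cases p)
    have "x - y \<in> {-1..1}" using p pxy by (auto simp: cbox_Pair_iff)
    then have "W (y - x) = W (x - y)" using W_even[of "x - y"] by simp
    then show "(\<lambda>(x, y). W (y - x) * (f t y * ft t x)) p = ?k1 p" by (simp add: pxy)
  qed
  also have "integral ?S ?k1 = integral (cbox 0 1) (\<lambda>x. integral (cbox 0 1) (\<lambda>y. W (x - y) * (ft t x * f t y)))"
    using integral_prod_continuous[OF sq_cont(1)[OF t]] by simp
  also have "\<dots> = integral {0..1} (\<lambda>x. ft t x * H t x)"
  proof -
    have "\<And>x. integral (cbox 0 1) (\<lambda>y. W (x - y) * (ft t x * f t y)) = ft t x * H t x"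
      unfolding H_def box_real(2) by (subst integral_mult_right[symmetric]) (simp add: algebra_simps)
    then show ?thesis by (simp add: box_real(2))
  qed
  finally show ?thesis by simp
qed

abbreviation c :: "real \<Rightarrow> real \<Rightarrow> real" where "c t \<equiv> circ_conv V (f t)"

lemma Vf_cont:
  assumes t: "t \<ge> 0"
  shows "continuous_on (U \<times> cbox 0 1) (\<lambda>(x, y). V (x - y) * f t y)"
proof -
  have "continuous_on (U \<times> cbox 0 1) (\<lambda>q. V (fst q - snd q) * f t (snd q))"
    using t by (intro continuous_intros continuous_on_compose2[OF V_cont] fc) auto
  then show ?thesis by (simp add: case_prod_beta)
qed

lemma c_cont: "t \<ge> 0 \<Longrightarrow> continuous_on S (c t)"
  unfolding circ_conv_def[abs_def] box_real(2)[symmetric]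
  by (rule integral_continuous_on_param[OF Vf_cont])

lemma H_deriv:
  assumes t: "t \<ge> 0" and x: "x \<in> {-1<..<2}"
  shows "((H t) has_real_derivative c t x) (at x)"
proof -
  have "((\<lambda>x. integral (cbox 0 1) (\<lambda>y. W (x - y) * f t y)) has_real_derivative
          integral (cbox 0 1) (\<lambda>y. V (x - y) * f t y)) (at x within {-1<..<2})"
  proof (rule leibniz_rule_field_derivative)
    show "((\<lambda>x. W (x - y) * f t y) has_field_derivative V (z - y) * f t y) (at z within {-1<..<2})"
      if "z \<in> {-1<..<2}" "y \<in> cbox 0 1" for z y
    proof -
      have w: "(W has_real_derivative V (z - y)) (at (z - y))"
        using that by (intro W_deriv) auto
      have g: "((\<lambda>x. x - y) has_real_derivative 1) (at z)" by (auto intro!: derivative_eq_intros)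
      have "((\<lambda>x. W (x - y) * f t y) has_field_derivative V (z - y) * 1 * f t y) (at z)"
        using DERIV_cmult_right[OF DERIV_chain2[OF w g], of "f t y"] by simp
      then show ?thesis using has_field_derivative_at_within by fastforce
    qed
    show "(\<lambda>y. W (z - y) * f t y) integrable_on cbox 0 1" if "z \<in> {-1<..<2}" for z
    proof (rule integrable_continuous)
      show "continuous_on (cbox 0 1) (\<lambda>y. W (z - y) * f t y)"
        using t that by (intro continuous_intros Wcomp fc) auto
    qed
    show "continuous_on ({-1<..<2} \<times> cbox 0 1) (\<lambda>(x, y). V (x - y) * f t y)"
      by (rule Vf_cont[OF t])
  qed (use x in auto)
  moreover have "at x within {-1<..<2} = at x" using x by (intro at_within_open) auto
  ultimately show ?thesis unfolding H_def[abs_def] circ_conv_def box_real(2) by simp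
qed

lemma c_per: "c t (x + 1) = c t x"
  unfolding circ_conv_def
proof (rule integral_cong)
  fix y show "V (x + 1 - y) * f t y = V (x - y) * f t y"
    using V_per[rule_format, of "x - y"] by (simp add: algebra_simps)
qed

lemma H_per: "H t 1 = H t 0"
  unfolding H_def
proof (rule integral_cong)
  fix y :: real assume "y \<in> {0..1}"
  then show "W (1 - y) * f t y = W (0 - y) * f t y"
    using W_shift[of "-y"] by (simp add: algebra_simps)
qed

lemma ibp:
  assumes t: "t \<ge> 0"
  shows "integral {0..1} (\<lambda>x. c t x * (c t x * f t x)) = - integral {0..1} (\<lambda>x. ft t x * H t x)"
proof -
  define I where "I = integral {0..1} (\<lambda>x. H t x * ft t x)"
  have Hd: "((H t) has_vector_derivative c t x) (at x)" if "x \<in> {0..1}" for x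
    using H_deriv[OF t, of x] that by (simp add: has_real_derivative_iff_has_vector_derivative)
  have gd: "((\<lambda>x. c t x * f t x) has_vector_derivative ft t x) (at x)" for x
    using dG t by (simp add: has_real_derivative_iff_has_vector_derivative)
  have Hc: "continuous_on {0..1} (H t)"
    by (rule DERIV_continuous_on[of _ _ "c t"]) (use H_deriv[OF t] has_field_derivative_at_within in force)
  have gc: "continuous_on {0..1} (\<lambda>x. c t x * f t x)"
    by (rule DERIV_continuous_on[of _ _ "ft t"]) (use dG t has_field_derivative_at_within in blast)
  have ftc': "continuous_on {0..1} (ft t)"
    using ftc[of "{0..1}" "\<lambda>_. t" "\<lambda>x. x"] t by auto
  have "((\<lambda>x. H t x * ft t x) has_integral I) {0..1}"
    unfolding I_def using Hc ftc' by (intro integrable_integral integrable_continuous_real continuous_intros)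
  moreover have "H t 1 * (c t 1 * f t 1) - H t 0 * (c t 0 * f t 0) - (- I) = I"
    using H_per[of t] c_per[of t 0] f_per[rule_format, of t 0] t by simp
  ultimately have "((\<lambda>x. H t x * ft t x) has_integral
        (H t 1 * (c t 1 * f t 1) - H t 0 * (c t 0 * f t 0) - (- I))) {0..1}" by simp
  from integration_by_parts[OF bounded_bilinear_mult, of 0 1 "H t" "\<lambda>x. c t x * f t x" "c t" "ft t", OF _ Hc gc Hd gd this]
  have "((\<lambda>x. c t x * (c t x * f t x)) has_integral - I) {0..1}" by simp
  then show ?thesis unfolding I_def by (simp add: integral_unique mult.commute)
qed

definition P :: "real \<Rightarrow> real" where
  "P t = integral {0..1} (\<lambda>x. c t x * (c t x * f t x))"

lemma D_P: "t \<ge> 0 \<Longrightarrow> D t = - 2 * P t"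
  using D_eq ibp unfolding P_def by simp

lemma integrand_nonneg: "t \<ge> 0 \<Longrightarrow> 0 \<le> c t x * (c t x * f t x)"
proof -
  assume t: "t \<ge> 0"
  have "c t x * (c t x * f t x) = (c t x * c t x) * f t x" by simp
  also have "\<dots> \<ge> 0" using mult_nonneg_nonneg[OF zero_le_square[of "c t x"], of "f t x"] f_nonneg t by simp
  finally show ?thesis .
qed

lemma integrand_cont: "t \<ge> 0 \<Longrightarrow> continuous_on {0..1} (\<lambda>x. c t x * (c t x * f t x))"
  using c_cont[of t "{0..1}"] fc[of "{0..1}" "\<lambda>_. t" "\<lambda>x. x"] by (auto intro!: continuous_intros)

lemma P_nonneg: "t \<ge> 0 \<Longrightarrow> P t \<ge> 0"
  unfolding P_def
  by (rule integral_nonneg[OF integrable_continuous_real[OF integrand_cont]]) (auto intro: integrand_nonneg)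

lemma E_cont: "continuous_on {0..} E"
  using E_deriv by (intro DERIV_continuous_on) auto

lemma E_at: "t > 0 \<Longrightarrow> (E has_real_derivative D t) (at t)"
proof -
  assume t: "t > 0"
  have "(E has_real_derivative D t) (at t within {0<..})"
    using E_deriv[of t] t by (rule_tac DERIV_subset) auto
  moreover have "at t within {0<..} = at t" using t by (intro at_within_open) auto
  ultimately show ?thesis by simp
qed

lemma E_mono:
  assumes a: "0 \<le> a" and ab: "a \<le> b"
  shows "E b \<le> E a"
proof (rule DERIV_nonpos_imp_decreasing_open[OF ab])
  fix x assume "a < x"
  then show "\<exists>y. DERIV E x :> y \<and> y \<le> 0" using a E_at[of x] D_P[of x] P_nonneg[of x] by auto
next
  show "continuous_on {a..b} E"
    using continuous_on_subset[OF E_cont] a by auto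
qed

lemma E_Tper: "t \<ge> 0 \<Longrightarrow> E (t + T) = E t"
proof -
  assume t: "t \<ge> 0"
  have "f (t + T) = f t" using f_tper t by auto
  then show ?thesis unfolding E_def by simp
qed

lemma E_kT: "E (real n * T) = E 0"
proof (induction n)
  case (Suc n)
  have "E (real (Suc n) * T) = E (real n * T + T)" by (simp add: algebra_simps)
  also have "\<dots> = E (real n * T)" using T_pos by (intro E_Tper) auto
  finally show ?case using Suc by simp
qed simp

lemma E_const: "t \<ge> 0 \<Longrightarrow> E t = E 0"
proof -
  assume t: "t \<ge> 0"
  obtain n where n: "t / T \<le> real n" using real_arch_simple by blast
  have tn: "t \<le> real n * T" using n T_pos by (simp add: field_simps)
  have "E (real n * T) \<le> E t" using E_mono[OF t tn] .
  moreover have "E t \<le> E 0" using E_mono[OF _ t] by simp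
  ultimately show ?thesis using E_kT[of n] by simp
qed

lemma D_zero: "t > 0 \<Longrightarrow> D t = 0"
proof -
  assume t: "t > 0"
  have "((\<lambda>_. E 0) has_real_derivative D t) (at t)"
    by (rule has_field_derivative_transform_within_open[OF E_at[OF t], of "{0<..}"])
       (use t in \<open>auto intro!: E_const\<close>)
  then show ?thesis using DERIV_unique[OF _ DERIV_const] by blast
qed

lemma per_int:
  assumes p: "\<forall>x. p (x + 1) = (p x :: real)"
  shows "p (x + real_of_int k) = p x"
proof -
  have nat: "p (y + real n) = p y" for y n
  proof (induction n)
    case (Suc n)
    have "p (y + real (Suc n)) = p ((y + real n) + 1)" by (simp add: algebra_simps)
    also have "\<dots> = p (y + real n)" using p by blast
    finally show ?case using Suc by simp
  qed simp
  show ?thesis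
  proof (cases "k \<ge> 0")
    case True
    then show ?thesis using nat[of x "nat k"] by simp
  next
    case False
    have "p (x + real_of_int k + real (nat (-k))) = p (x + real_of_int k)" by (rule nat)
    then show ?thesis using False by simp
  qed
qed

lemma g_zero: "t > 0 \<Longrightarrow> c t x * f t x = 0"
proof -
  assume t: "t > 0"
  have P0: "P t = 0" using D_zero[OF t] D_P[of t] t by simp
  have z01: "c t y * f t y = 0" if y: "y \<in> {0..1}" for y
  proof -
    have "c t y * (c t y * f t y) = 0"
    proof (rule has_integral_0_cbox_imp_0[of 0 1 "\<lambda>x. c t x * (c t x * f t x)" y])
      show "continuous_on (cbox 0 1) (\<lambda>x. c t x * (c t x * f t x))"
        using integrand_cont t by (simp add: box_real(2))
      show "0 \<le> c t x * (c t x * f t x)" if "x \<in> box 0 1" for x using integrand_nonneg t by simp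
      show "((\<lambda>x. c t x * (c t x * f t x)) has_integral 0) (cbox 0 1)"
      proof -
        have "((\<lambda>x. c t x * (c t x * f t x)) has_integral P t) {0..1}"
          unfolding P_def using integrable_continuous_real[OF integrand_cont[of t]] t
          by (intro integrable_integral) simp
        then show ?thesis using P0 by (simp add: box_real(2))
      qed
    qed (use y in \<open>auto simp: box_real\<close>)
    then have "(c t y * f t y) * (c t y * f t y) = 0" by (simp add: algebra_simps)
    then show ?thesis by simp
  qed
  have per: "\<forall>x. (\<lambda>x. c t x * f t x) (x + 1) = c t x * f t x"
    using c_per f_per t by auto
  have "c t x * f t x = (\<lambda>x. c t x * f t x) ((x - real_of_int \<lfloor>x\<rfloor>) + real_of_int \<lfloor>x\<rfloor>)" by simp
  also have "\<dots> = c t (x - real_of_int \<lfloor>x\<rfloor>) * f t (x - real_of_int \<lfloor>x\<rfloor>)"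
    by (rule per_int[OF per])
  also have "\<dots> = 0"
  proof (rule z01)
    have "0 \<le> frac x" "frac x < 1" by (rule frac_ge_0, rule frac_lt_1)
    then show "x - real_of_int \<lfloor>x\<rfloor> \<in> {0..1}" by (simp add: frac_def)
  qed
  finally show ?thesis .
qed

lemma ft_zero: "t > 0 \<Longrightarrow> ft t \<theta> = 0"
proof -
  assume t: "t > 0"
  have "((\<lambda>\<phi>. c t \<phi> * f t \<phi>) has_real_derivative ft t \<theta>) (at \<theta>)" using dG t by auto
  moreover have "(\<lambda>\<phi>. c t \<phi> * f t \<phi>) = (\<lambda>_. 0)" using g_zero[OF t] by auto
  ultimately have "((\<lambda>_. 0) has_real_derivative ft t \<theta>) (at \<theta>)" by simp
  then show ?thesis using DERIV_unique[OF _ DERIV_const] by blast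
qed

lemma stationary: "t \<ge> 0 \<Longrightarrow> f t \<theta> = f 0 \<theta>"
proof (cases "t = 0")
  case False
  assume "t \<ge> 0"
  then have t: "t > 0" using False by simp
  show ?thesis
  proof (rule DERIV_isconst_end[OF t])
    show "continuous_on {0..t} (\<lambda>s. f s \<theta>)"
      by (rule continuous_on_subset[OF DERIV_continuous_on[of "{0..}" "\<lambda>s. f s \<theta>" "\<lambda>s. ft s \<theta>"]])
         (use dT in auto)
    fix x assume x: "0 < x" "x < t"
    have "((\<lambda>s. f s \<theta>) has_real_derivative ft x \<theta>) (at x within {0<..})"
      using DERIV_subset[OF dT[rule_format, of x \<theta>], of "{0<..}"] x
      by (simp add: subset_eq)
    moreover have "at x within {0<..} = at x" using x by (intro at_within_open) auto
    ultimately show "DERIV (\<lambda>s. f s \<theta>) x :> 0" using ft_zero[of x] x by simp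
  qed
qed simp

end

theorem mainTheorem16:
  fixes V :: "real \<Rightarrow> real" and f :: "real \<Rightarrow> real \<Rightarrow> real" and T :: real
  assumes V_cont: "continuous_on UNIV V"
    and V_per: "\<forall>x. V (x + 1) = V x"
    and V_odd: "\<forall>x. V (- x) = - V x"
    and f_per: "\<forall>t\<ge>0. \<forall>\<theta>. f t (\<theta> + 1) = f t \<theta>"
    and f_nonneg: "\<forall>t\<ge>0. \<forall>\<theta>. f t \<theta> \<ge> 0"
    and f_C1_TP: "\<exists>ft fx.
        continuous_on ({0..} \<times> UNIV) (\<lambda>(t, \<theta>). ft t \<theta>) \<and>
        continuous_on ({0..} \<times> UNIV) (\<lambda>(t, \<theta>). fx t \<theta>) \<and>
        (\<forall>t\<ge>0. \<forall>\<theta>. ((\<lambda>s. f s \<theta>) has_real_derivative ft t \<theta>) (at t within {0..})) \<and>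
        (\<forall>t\<ge>0. \<forall>\<theta>. ((\<lambda>\<phi>. f t \<phi>) has_real_derivative fx t \<theta>) (at \<theta>)) \<and>
        (\<forall>t\<ge>0. \<forall>\<theta>. ((\<lambda>\<phi>. circ_conv V (f t) \<phi> * f t \<phi>) has_real_derivative ft t \<theta>) (at \<theta>))"
    and T_pos: "T > 0"
    and f_tper: "\<forall>t\<ge>0. \<forall>\<theta>. f (t + T) \<theta> = f t \<theta>"
  shows "\<forall>t\<ge>0. \<forall>\<theta>. f t \<theta> = f 0 \<theta>"
  proof -
  obtain ft fx where
    c1: "continuous_on ({0..} \<times> UNIV) (\<lambda>(t, \<theta>). ft t \<theta>)"
    and c2: "continuous_on ({0..} \<times> UNIV) (\<lambda>(t, \<theta>). fx t \<theta>)"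
    and d1: "\<forall>t\<ge>0. \<forall>\<theta>. ((\<lambda>s. f s \<theta>) has_real_derivative ft t \<theta>) (at t within {0..})"
    and d2: "\<forall>t\<ge>0. \<forall>\<theta>. ((\<lambda>\<phi>. f t \<phi>) has_real_derivative fx t \<theta>) (at \<theta>)"
    and d3: "\<forall>t\<ge>0. \<forall>\<theta>. ((\<lambda>\<phi>. circ_conv V (f t) \<phi> * f t \<phi>) has_real_derivative ft t \<theta>) (at \<theta>)"
    using f_C1_TP by blast
  interpret tp V f ft fx T
    by (unfold_locales) (use V_cont V_per V_odd f_per f_nonneg c1 c2 d1 d2 d3 T_pos f_tper in auto)
  show ?thesis using stationary by blast
qed

end
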